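(* Let $\rho\in\{1/2,1\}$, let $s>0$ and $\eta>0$ be real numbers, let $q\in\mathbb{C}$, and let $\epsilon$ be real with $1<\epsilon\le 1+\rho$. Define $\ell:(0,\infty)\to\mathbb{R}$ by $$\ell(\gamma) = -\rho\log(1+\gamma s) + \rho\,\frac{|q|^2}{\gamma^{-1}+s} + (\epsilon-1)\log\gamma - \eta\gamma .$$ Then $\ell$ has a single stationary point on $(0,\infty)$, and this stationary point corresponds to a maximum of $\ell$.
   Context: This function arises in a sparse Bayesian learning scheme: $\rho=1/2$ corresponds to a real signal model and $\rho=1$ to a complex one; $\epsilon$ is the shape parameter and $\eta$ the (positive) rate parameter of a gamma hyperprior; $s=\mathbf{h}^H\mathbf{C}^{-1}\mathbf{h}$ and $q=\mathbf{y}^H\mathbf{C}^{-1}\mathbf{h}$ for a nonzero vector $\mathbf{h}$, a vector $\mathbf{y}$, and a Hermitian positive definite matrix $\mathbf{C}$, so in particular $s>0$. The domain of $\ell$ is $(0,\infty)$. *)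

theory Defs
  imports "HOL-Analysis.Analysis"
begin

definition sbl_ell :: "real \<Rightarrow> real \<Rightarrow> complex \<Rightarrow> real \<Rightarrow> real \<Rightarrow> real \<Rightarrow> real" where
  "sbl_ell \<rho> s q \<epsilon> \<eta> \<gamma> =
     - \<rho> * ln (1 + \<gamma> * s) + \<rho> * ((cmod q)\<^sup>2 / (inverse \<gamma> + s))
     + (\<epsilon> - 1) * ln \<gamma> - \<eta> * \<gamma>"

end

theory Submission
  imports Defs
begin
lemma dl:
  fixes \<rho> s \<eta> \<epsilon> g :: real and q :: complex
  assumes "s > 0" "g > 0"
  shows "(sbl_ell \<rho> s q \<epsilon> \<eta> has_real_derivative
     (- \<rho> * s / (1 + g * s) + \<rho> * (cmod q)\<^sup>2 / (1 + g * s)\<^sup>2 + (\<epsilon> - 1) / g - \<eta>)) (at g)"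
proof -
  have "g * s > 0" using assms by simp
  then have p: "1 + g * s > 0" by linarith
  have "inverse g > 0" using assms by simp
  then have q: "inverse g + s > 0" using assms by linarith
  have qne: "inverse g + s \<noteq> 0" using q by simp
  have gne: "g \<noteq> 0" using assms by simp
  show ?thesis
    unfolding sbl_ell_def[abs_def]
    apply (rule derivative_eq_intros refl p qne gne assms(2))+
    using p gne apply (simp add: field_simps power2_eq_square)
    done
qed
theorem proposition2:
  fixes \<rho> s \<eta> \<epsilon> :: real and q :: complex
  assumes "\<rho> \<in> {1/2, 1}" and "s > 0" and "\<eta> > 0"
    and "1 < \<epsilon>" and "\<epsilon> \<le> 1 + \<rho>"
  shows "(\<exists>!\<gamma>. \<gamma> > 0 \<and> (sbl_ell \<rho> s q \<epsilon> \<eta> has_real_derivative 0) (at \<gamma>))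
       \<and> (\<forall>\<gamma>>0. (sbl_ell \<rho> s q \<epsilon> \<eta> has_real_derivative 0) (at \<gamma>) \<longrightarrow>
             (\<forall>x>0. sbl_ell \<rho> s q \<epsilon> \<eta> x \<le> sbl_ell \<rho> s q \<epsilon> \<eta> \<gamma>))"
proof -
  note s = \<open>s > 0\<close> and e = \<open>\<eta> > 0\<close>
  define a where "a = (cmod q)\<^sup>2"
  define c3 where "c3 = - \<eta> * s\<^sup>2"
  define c2 where "c2 = s\<^sup>2 * (\<epsilon> - 1 - \<rho>) - 2 * \<eta> * s"
  define c1 where "c1 = - \<rho> * s + \<rho> * a + 2 * (\<epsilon> - 1) * s - \<eta>"
  define c0 where "c0 = \<epsilon> - 1"
  define H where "H = (\<lambda>g. c3 * g\<^sup>2 + c2 * g + c1 + c0 / g)"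
  define D where "D = (\<lambda>g. - \<rho> * s / (1 + g * s) + \<rho> * a / (1 + g * s)\<^sup>2 + (\<epsilon> - 1) / g - \<eta>)"
  define f where "f = sbl_ell \<rho> s q \<epsilon> \<eta>"
  have c3n: "c3 < 0" unfolding c3_def using s e by simp
  have c2n: "c2 < 0"
  proof -
    have "s\<^sup>2 * (\<epsilon> - 1 - \<rho>) \<le> 0" using assms(5) by (simp add: mult_nonneg_nonpos)
    moreover have "2 * \<eta> * s > 0" using s e by simp
    ultimately show ?thesis unfolding c2_def by linarith
  qed
  have c0p: "c0 > 0" unfolding c0_def using assms(4) by simp
  have pos: "1 + g * s > 0" if "g > 0" for g
  proof -
    have "g * s > 0" using that s by simp
    then show ?thesis by linarith
  qed
  have DH: "D g = H g / (1 + g * s)\<^sup>2" if g: "g > 0" for g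
  proof -
    define u where "u = 1 + g * s"
    have u: "u \<noteq> 0" using pos[OF g] unfolding u_def by simp
    have gn: "g \<noteq> 0" using g by simp
    have e1: "D g * u\<^sup>2 = - \<rho> * s * u + \<rho> * a + (\<epsilon> - 1) * u\<^sup>2 / g - \<eta> * u\<^sup>2"
      unfolding D_def u_def[symmetric] using u gn by (simp add: field_simps power2_eq_square)
    have e2: "- \<rho> * s * u + \<rho> * a + (\<epsilon> - 1) * u\<^sup>2 / g - \<eta> * u\<^sup>2 = H g"
      unfolding H_def c3_def c2_def c1_def c0_def u_def using gn
      by (simp add: field_simps power2_eq_square)
    have "D g * u\<^sup>2 = H g" using e1 e2 by simp
    then show ?thesis using u unfolding u_def by (simp add: eq_divide_eq)
  qed
  have sgnpos: "D g > 0 \<longleftrightarrow> H g > 0" if g: "g > 0" for g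
    using DH[OF g] pos[OF g] by (simp add: zero_less_divide_iff)
  have sgnneg: "D g < 0 \<longleftrightarrow> H g < 0" if g: "g > 0" for g
    using DH[OF g] pos[OF g] by (simp add: divide_less_0_iff)
  have sgn0: "D g = 0 \<longleftrightarrow> H g = 0" if g: "g > 0" for g
    using DH[OF g] pos[OF g] by simp
  have mono: "H y < H x" if "0 < x" "x < y" for x y
  proof -
    have "x\<^sup>2 < y\<^sup>2" using that by (simp add: power_strict_mono)
    then have 1: "c3 * y\<^sup>2 < c3 * x\<^sup>2" using c3n by simp
    have 2: "c2 * y \<le> c2 * x" using c2n that by simp
    have 3: "c0 / y < c0 / x" using c0p that by (simp add: divide_strict_left_mono)
    show ?thesis unfolding H_def using 1 2 3 by simp
  qed
  have deriv: "(f has_real_derivative D g) (at g)" if "g > 0" for g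
    unfolding f_def D_def a_def using dl[OF s that] by simp
  define M where "M = \<bar>c1\<bar> + \<bar>c2\<bar> + \<bar>c3\<bar> + 1"
  have M1: "M \<ge> 1" unfolding M_def by simp
  define x1 where "x1 = min 1 (c0 / (2 * M))"
  have x1p: "x1 > 0" unfolding x1_def using c0p M1 by simp
  have x11: "x1 \<le> 1" unfolding x1_def by simp
  have H1: "H x1 > 0"
  proof -
    have "x1 \<le> c0 / (2 * M)" unfolding x1_def by simp
    then have "x1 * (2 * M) \<le> c0" using M1 by (simp add: pos_le_divide_eq)
    then have a1: "c0 / x1 \<ge> 2 * M" using x1p by (simp add: pos_le_divide_eq mult.commute)
    have "(- c2) * x1 \<le> - c2" using x11 c2n by (simp add: mult_left_le)
    then have a2: "c2 * x1 \<ge> - \<bar>c2\<bar>" using c2n by simp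
    have "x1\<^sup>2 \<le> 1" using x1p x11 by (simp add: power_le_one)
    then have "(- c3) * x1\<^sup>2 \<le> - c3" using c3n by (simp add: mult_left_le)
    then have a3: "c3 * x1\<^sup>2 \<ge> - \<bar>c3\<bar>" using c3n by simp
    show ?thesis unfolding H_def using a1 a2 a3 M_def by linarith
  qed
  define x2 where "x2 = max 1 ((c0 + \<bar>c1\<bar> + 1) / (- c3))"
  have x21: "x2 \<ge> 1" unfolding x2_def by simp
  have H2: "H x2 < 0"
  proof -
    have b1: "c0 / x2 \<le> c0" using x21 c0p by (simp add: divide_le_eq)
    have b2: "c2 * x2 \<le> 0" using c2n x21 by (simp add: mult_nonpos_nonneg)
    have "x2 \<le> x2\<^sup>2" using x21 by (simp add: power2_eq_square)
    then have b3: "c3 * x2\<^sup>2 \<le> c3 * x2" using c3n by (simp add: mult_left_mono_neg)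
    have "(c0 + \<bar>c1\<bar> + 1) / (- c3) \<le> x2" unfolding x2_def by simp
    then have "c0 + \<bar>c1\<bar> + 1 \<le> x2 * (- c3)"
      using pos_divide_le_eq[of "- c3" "c0 + \<bar>c1\<bar> + 1" x2] c3n by linarith
    then have b4: "c3 * x2 \<le> - (c0 + \<bar>c1\<bar> + 1)" by (simp add: algebra_simps)
    show ?thesis unfolding H_def using b1 b2 b3 b4 by linarith
  qed
  have cont: "continuous_on {x1..x2} H"
    unfolding H_def using x1p by (auto intro!: continuous_intros)
  obtain g0 where g0: "x1 \<le> g0" "g0 \<le> x2" "H g0 = 0"
    using IVT2'[of H x2 0 x1] H1 H2 cont x11 x21 by force
  have g0p: "g0 > 0" using g0 x1p by simp
  have Dz: "D g = 0" if "g > 0" "(f has_real_derivative 0) (at g)" for g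
    using DERIV_unique[OF deriv[OF that(1)] that(2)] .
  have uniq: "g = g0" if "g > 0" "H g = 0" for g
  proof (rule ccontr)
    assume "g \<noteq> g0"
    then consider "g < g0" | "g0 < g" by linarith
    then show False using mono[of g g0] mono[of g0 g] that g0p g0(3) by cases auto
  qed
  have ex: "\<exists>!\<gamma>. \<gamma> > 0 \<and> (f has_real_derivative 0) (at \<gamma>)"
  proof (rule ex1I[of _ g0])
    show "g0 > 0 \<and> (f has_real_derivative 0) (at g0)"
      using g0p deriv[OF g0p] sgn0[OF g0p] g0(3) by simp
    fix g assume "g > 0 \<and> (f has_real_derivative 0) (at g)"
    then show "g = g0" using Dz sgn0 uniq by blast
  qed
  have mx: "f x \<le> f g" if g: "g > 0" "(f has_real_derivative 0) (at g)" and x: "x > 0" for g x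
  proof -
    have Hg: "H g = 0" using Dz[OF g] sgn0 g(1) by blast
    consider "x < g" | "x = g" | "g < x" by linarith
    then show ?thesis
    proof cases
      case 1
      have "\<forall>t. x \<le> t \<and> t \<le> g \<longrightarrow> (f has_real_derivative D t) (at t)"
        using x deriv by auto
      then obtain z where z: "x < z" "z < g" "f g - f x = (g - x) * D z"
        using MVT2[OF 1] by blast
      have "H z > 0" using mono[of z g] z x Hg by simp
      then have "D z > 0" using sgnpos z x by simp
      moreover have "g - x > 0" using 1 by simp
      ultimately have "(g - x) * D z > 0" by simp
      then show ?thesis using z by linarith
    next
      case 2 then show ?thesis by simp
    next
      case 3
      have "\<forall>t. g \<le> t \<and> t \<le> x \<longrightarrow> (f has_real_derivative D t) (at t)"
        using g deriv by auto
      then obtain z where z: "g < z" "z < x" "f x - f g = (x - g) * D z"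
        using MVT2[OF 3] by blast
      have "H z < 0" using mono[of g z] z g Hg by simp
      then have "D z < 0" using sgnneg z g by simp
      moreover have "x - g > 0" using 3 by simp
      ultimately have "(x - g) * D z < 0" by (simp add: mult_pos_neg)
      then show ?thesis using z by linarith
    qed
  qed
  show ?thesis using ex mx unfolding f_def by blast
qed

end
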